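(* For every $(\mathbf{j},y,x)\in\Sigma\times\mathbb{R}\times[0,1)$, every $n\in\mathbb{N}$ and every $r>0$, $$\mu_x\big(B^T_{(\mathbf{j},y,x)}(r)\cap\mathscr{P}^{n+1}(\mathbf{j},y,x)\big)=\frac1b\,\mu_{\frac{x+j_1}{b}}\Big(B^T_{G(\mathbf{j},y,x)}\big(\tfrac r\gamma\big)\cap\mathscr{P}^{n}\big(G(\mathbf{j},y,x)\big)\Big).$$
   Context: $b\ge2$ integer, $\gamma\in(0,1)$, $\phi$ a $\mathbb{Z}$-periodic Lipschitz function. $\Lambda=\{0,\dots,b-1\}$, $\Sigma=\Lambda^{\mathbb{Z}_+}$, $\nu$ uniform on $\Lambda$, $\sigma$ the left shift on $\Sigma$. $S(x,\mathbf{j})=\sum_{n\ge1}\gamma^{n-1}\phi\big(\frac{x+j_1+j_2b+\cdots+j_nb^{n-1}}{b^n}\big)$. $G(\mathbf{j},y,x)=\big(\sigma\mathbf{j},\ \frac{y-\phi(\frac{x+j_1}{b})}{\gamma},\ \frac{x+j_1}{b}\big)$. $\mu_x$ is the image of $\nu^{\mathbb{Z}_+}$ under $\mathbf{j}\mapsto(\mathbf{j},S(x,\mathbf{j}),x)$. $B^T_{(\mathbf{j},y,x)}(r)=\{(\mathbf{j}',y',x')\in\Sigma\times\mathbb{R}\times[0,1):|y-y'|\le r\}$. For $n\ge1$, $\mathscr{P}^n(\mathbf{j},y,x)=[j_1\cdots j_n]\times\mathbb{R}\times[0,1)$ where $[j_1\cdots j_n]$ is the cylinder of sequences starting with $j_1\cdots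 j_n$, and $\mathscr{P}^0(\mathbf{j},y,x)=\Sigma\times\mathbb{R}\times[0,1)$. *)

theory Defs
  imports "HOL-Probability.Probability"
begin

text \<open>Sequences j = (j_1, j_2, ...) are encoded 0-indexed: j 0 = j_1, j 1 = j_2, ...\<close>

definition Sig :: "nat \<Rightarrow> (nat \<Rightarrow> nat) set" where
  "Sig b = {j. \<forall>i. j i < b}"

definition nuZ :: "nat \<Rightarrow> (nat \<Rightarrow> nat) measure" where
  "nuZ b = PiM UNIV (\<lambda>_. uniform_count_measure {0..<b})"

definition shift :: "(nat \<Rightarrow> nat) \<Rightarrow> (nat \<Rightarrow> nat)" where
  "shift j = (\<lambda>i. j (Suc i))"

definition Sfun :: "nat \<Rightarrow> real \<Rightarrow> (real \<Rightarrow> real) \<Rightarrow> real \<Rightarrow> (nat \<Rightarrow> nat) \<Rightarrow> real" where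
  "Sfun b \<gamma> \<phi> x j =
     (\<Sum>m. \<gamma> ^ m * \<phi> ((x + (\<Sum>k<Suc m. real (j k) * real b ^ k)) / real b ^ Suc m))"

definition Gmap :: "nat \<Rightarrow> real \<Rightarrow> (real \<Rightarrow> real) \<Rightarrow> (nat \<Rightarrow> nat) \<times> real \<times> real
    \<Rightarrow> (nat \<Rightarrow> nat) \<times> real \<times> real" where
  "Gmap b \<gamma> \<phi> p = (case p of (j, y, x) \<Rightarrow>
     (shift j, (y - \<phi> ((x + real (j 0)) / real b)) / \<gamma>, (x + real (j 0)) / real b))"

definition mu :: "nat \<Rightarrow> real \<Rightarrow> (real \<Rightarrow> real) \<Rightarrow> real \<Rightarrow> ((nat \<Rightarrow> nat) \<times> real \<times> real) measure" where
  "mu b \<gamma> \<phi> x = distr (nuZ b) (nuZ b \<Otimes>\<^sub>M borel \<Otimes>\<^sub>M borel) (\<lambda>j. (j, Sfun b \<gamma> \<phi> x j, x))"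

definition BT :: "nat \<Rightarrow> (nat \<Rightarrow> nat) \<times> real \<times> real \<Rightarrow> real \<Rightarrow> ((nat \<Rightarrow> nat) \<times> real \<times> real) set" where
  "BT b p r = {(j', y', x'). j' \<in> Sig b \<and> x' \<in> {0..<1} \<and> \<bar>fst (snd p) - y'\<bar> \<le> r}"

definition Part :: "nat \<Rightarrow> nat \<Rightarrow> (nat \<Rightarrow> nat) \<times> real \<times> real \<Rightarrow> ((nat \<Rightarrow> nat) \<times> real \<times> real) set" where
  "Part b n p = {(j', y', x'). j' \<in> Sig b \<and> (\<forall>i<n. j' i = fst p i) \<and> x' \<in> {0..<1}}"

end

theory Submission imports Defs begin

lemma comp_meas[measurable]: "(\<lambda>j. real (j (k::nat))) \<in> borel_measurable (nuZ b)"
proof -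
  have "(\<lambda>j. j k) \<in> measurable (nuZ b) (uniform_count_measure {0..<b})"
    unfolding nuZ_def by (rule measurable_component_singleton) simp
  then have "(\<lambda>j. j k) \<in> measurable (nuZ b) (count_space {0..<b})"
    using measurable_cong_sets[OF refl sets_uniform_count_measure_count_space[of "{0..<b}"]] by blast
  moreover have "real \<in> borel_measurable (count_space {0..<b})" by simp
  ultimately show ?thesis using measurable_compose by (metis (no_types, lifting) measurable_cong)
qed

lemma phi_bounded:
  fixes \<phi> :: "real \<Rightarrow> real"
  assumes per: "\<forall>t. \<phi> (t + 1) = \<phi> t" and L: "L-lipschitz_on UNIV \<phi>"
  shows "\<bar>\<phi> t\<bar> \<le> \<bar>\<phi> 0\<bar> + L"
proof -
  have pn: "\<phi> (s + real n) = \<phi> s" for s n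
  proof (induction n arbitrary: s)
    case (Suc n)
    have "\<phi> (s + real (Suc n)) = \<phi> ((s + real n) + 1)" by (simp add: algebra_simps)
    also have "\<dots> = \<phi> s" using per Suc by simp
    finally show ?case .
  qed simp
  have pm: "\<phi> (s - real n) = \<phi> s" for s n
    using pn[of "s - real n" n] by simp
  have pi: "\<phi> (s - real_of_int k) = \<phi> s" for s k
  proof (cases "k \<ge> 0")
    case True then show ?thesis using pm[of s "nat k"] by simp
  next
    case False then show ?thesis using pn[of s "nat (-k)"] by simp
  qed
  define u where "u = t - real_of_int \<lfloor>t\<rfloor>"
  have u: "0 \<le> u" "u < 1" unfolding u_def by linarith+
  have "\<phi> t = \<phi> u" unfolding u_def by (simp add: pi)
  moreover have "dist (\<phi> u) (\<phi> 0) \<le> L * dist u 0"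
    using L by (intro lipschitz_onD) auto
  moreover have "L \<ge> 0" using L lipschitz_on_nonneg by blast
  ultimately have "\<bar>\<phi> t - \<phi> 0\<bar> \<le> L" using u
    by (simp add: dist_real_def) (smt (verit) mult_left_le)
  then show ?thesis by linarith
qed

lemma S_summable:
  fixes \<phi> :: "real \<Rightarrow> real"
  assumes "0 < \<gamma>" "\<gamma> < 1" and bnd: "\<And>t. \<bar>\<phi> t\<bar> \<le> B"
  shows "summable (\<lambda>m. \<gamma> ^ m * \<phi> (f m))"
proof (rule summable_comparison_test[where g = "\<lambda>m. B * \<gamma> ^ m"])
  show "\<exists>N. \<forall>n\<ge>N. norm (\<gamma> ^ n * \<phi> (f n)) \<le> B * \<gamma> ^ n"
    using assms by (auto simp: abs_mult intro!: exI[of _ 0] mult_left_mono[of _ B, simplified mult.commute])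
  show "summable (\<lambda>m. B * \<gamma> ^ m)" using assms by (intro summable_mult summable_geometric) auto
qed

lemma S_rec:
  fixes \<phi> :: "real \<Rightarrow> real"
  assumes "0 < \<gamma>" "\<gamma> < 1" and bnd: "\<And>t. \<bar>\<phi> t\<bar> \<le> B" and b: "b > 0"
  shows "Sfun b \<gamma> \<phi> x (case_nat s \<omega>) = \<phi> ((x + real s) / real b) + \<gamma> * Sfun b \<gamma> \<phi> ((x + real s) / real b) \<omega>"
proof -
  define f where "f m = \<gamma> ^ m * \<phi> ((x + (\<Sum>k<Suc m. real (case_nat s \<omega> k) * real b ^ k)) / real b ^ Suc m)" for m
  define g where "g m = \<gamma> ^ m * \<phi> (((x + real s) / real b + (\<Sum>k<Suc m. real (\<omega> k) * real b ^ k)) / real b ^ Suc m)" for m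
  have sf: "summable f" unfolding f_def using assms by (intro S_summable) auto
  have sg: "summable g" unfolding g_def using assms by (intro S_summable) auto
  have fS: "f (Suc m) = \<gamma> * g m" for m
  proof -
    have "(\<Sum>k<Suc (Suc m). real (case_nat s \<omega> k) * real b ^ k) = real s + real b * (\<Sum>k<Suc m. real (\<omega> k) * real b ^ k)"
      by (subst sum.lessThan_Suc_shift) (simp add: sum_distrib_left distrib_left mult.assoc mult.left_commute)
    then have "(x + (\<Sum>k<Suc (Suc m). real (case_nat s \<omega> k) * real b ^ k)) / real b ^ Suc (Suc m)
        = ((x + real s) / real b + (\<Sum>k<Suc m. real (\<omega> k) * real b ^ k)) / real b ^ Suc m"
      using b by (simp add: field_simps)
    then show ?thesis unfolding f_def g_def by simp
  qed
  have "Sfun b \<gamma> \<phi> x (case_nat s \<omega>) = suminf f" unfolding Sfun_def f_def by simp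
  also have "\<dots> = f 0 + (\<Sum>m. f (Suc m))" using suminf_split_head[OF sf] by simp
  also have "(\<Sum>m. f (Suc m)) = \<gamma> * suminf g" unfolding fS using suminf_mult[OF sg] by simp
  also have "f 0 = \<phi> ((x + real s) / real b)" unfolding f_def by simp
  also have "suminf g = Sfun b \<gamma> \<phi> ((x + real s) / real b) \<omega>" unfolding Sfun_def g_def by simp
  finally show ?thesis .
qed

lemma S_meas[measurable]:
  fixes \<phi> :: "real \<Rightarrow> real"
  assumes "continuous_on UNIV \<phi>"
  shows "Sfun b \<gamma> \<phi> x \<in> borel_measurable (nuZ b)"
proof -
  have [measurable]: "\<phi> \<in> borel_measurable borel" using assms borel_measurable_continuous_onI by blast
  show ?thesis unfolding Sfun_def[abs_def] by measurable
qed

lemma space_nuZ: "space (nuZ b) = Sig b"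
  unfolding nuZ_def Sig_def by (auto simp: space_PiM space_uniform_count_measure)

lemma cylm: "{\<omega>\<in>space (nuZ b). \<forall>i<N. \<omega> i = c i} \<in> sets (nuZ b)"
  unfolding nuZ_def by measurable

lemma generic:
  fixes \<phi> :: "real \<Rightarrow> real"
  assumes cont: "continuous_on UNIV \<phi>" and x0: "x0 \<in> {0..<1}"
  shows "measure (mu b \<gamma> \<phi> x0) (BT b p \<rho> \<inter> Part b N p)
    = measure (nuZ b) {\<omega> \<in> space (nuZ b). (\<forall>i<N. \<omega> i = fst p i) \<and> \<bar>fst (snd p) - Sfun b \<gamma> \<phi> x0 \<omega>\<bar> \<le> \<rho>}"
proof -
  have [measurable]: "Sfun b \<gamma> \<phi> x0 \<in> borel_measurable (nuZ b)" using S_meas[OF cont] .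
  have cyl[measurable]: "{\<omega>\<in>space (nuZ b). \<forall>i<N. \<omega> i = fst p i} \<in> sets (nuZ b)"
    unfolding nuZ_def by measurable
  have yset: "{y'. \<bar>fst (snd p) - y'\<bar> \<le> \<rho>} \<in> sets (borel :: real measure)" by measurable
  have xset: "{0..<1::real} \<in> sets borel" by simp
  have eq: "BT b p \<rho> \<inter> Part b N p = {\<omega>\<in>space (nuZ b). \<forall>i<N. \<omega> i = fst p i} \<times> ({y'. \<bar>fst (snd p) - y'\<bar> \<le> \<rho>} \<times> {0..<1})"
    unfolding BT_def Part_def space_nuZ by auto
  have A: "BT b p \<rho> \<inter> Part b N p \<in> sets (nuZ b \<Otimes>\<^sub>M borel \<Otimes>\<^sub>M borel)"
    unfolding eq by (rule pair_measureI[OF cyl pair_measureI[OF yset xset]])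
  have f: "(\<lambda>j. (j, Sfun b \<gamma> \<phi> x0 j, x0)) \<in> measurable (nuZ b) (nuZ b \<Otimes>\<^sub>M borel \<Otimes>\<^sub>M borel)"
    by measurable
  have "measure (mu b \<gamma> \<phi> x0) (BT b p \<rho> \<inter> Part b N p)
      = measure (nuZ b) ((\<lambda>j. (j, Sfun b \<gamma> \<phi> x0 j, x0)) -` (BT b p \<rho> \<inter> Part b N p) \<inter> space (nuZ b))"
    unfolding mu_def using measure_distr[OF f A] .
  also have "(\<lambda>j. (j, Sfun b \<gamma> \<phi> x0 j, x0)) -` (BT b p \<rho> \<inter> Part b N p) \<inter> space (nuZ b)
     = {\<omega> \<in> space (nuZ b). (\<forall>i<N. \<omega> i = fst p i) \<and> \<bar>fst (snd p) - Sfun b \<gamma> \<phi> x0 \<omega>\<bar> \<le> \<rho>}"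
    unfolding eq using x0 by auto
  finally show ?thesis .
qed

theorem lemma9p1:
  fixes b :: nat and \<gamma> :: real and \<phi> :: "real \<Rightarrow> real"
    and j :: "nat \<Rightarrow> nat" and y x r :: real and n :: nat
  assumes "b \<ge> 2" and "0 < \<gamma>" and "\<gamma> < 1"
    and "\<forall>t. \<phi> (t + 1) = \<phi> t"
    and "\<exists>L. L-lipschitz_on UNIV \<phi>"
    and "j \<in> Sig b" and "x \<in> {0..<1}" and "r > 0"
  shows "measure (mu b \<gamma> \<phi> x) (BT b (j, y, x) r \<inter> Part b (Suc n) (j, y, x))
       = 1 / real b * measure (mu b \<gamma> \<phi> ((x + real (j 0)) / real b))
           (BT b (Gmap b \<gamma> \<phi> (j, y, x)) (r / \<gamma>) \<inter> Part b n (Gmap b \<gamma> \<phi> (j, y, x)))"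
proof -
  obtain L where L: "L-lipschitz_on UNIV \<phi>" using assms(5) by blast
  have cont: "continuous_on UNIV \<phi>" using lipschitz_on_continuous_on[OF L] .
  have bnd: "\<And>t. \<bar>\<phi> t\<bar> \<le> \<bar>\<phi> 0\<bar> + L" using phi_bounded[OF assms(4) L] .
  define x' where "x' = (x + real (j 0)) / real b"
  have j0: "j 0 < b" using assms(6) by (auto simp: Sig_def)
  have x': "x' \<in> {0..<1}"
  proof -
    have "x + real (j 0) < real b" using j0 assms(7) by auto
    then show ?thesis unfolding x'_def using assms(1,7) by (auto simp: field_simps)
  qed
  define M where "M = uniform_count_measure {0..<b}"
  have pM: "prob_space M" unfolding M_def using assms(1) by (intro prob_space_uniform_count_measure) auto
  interpret SS: sequence_space M
    using pM by (simp add: prob_space_imp_sigma_finite product_prob_space.intro product_prob_space_axioms.intro product_sigma_finite.intro sequence_space_def)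
  interpret P: pair_sigma_finite M "\<Pi>\<^sub>M i::nat\<in>UNIV. M" ..
  have nuZ: "nuZ b = SS.S" unfolding nuZ_def M_def by simp
  have "Sfun b \<gamma> \<phi> x \<in> borel_measurable SS.S" "Sfun b \<gamma> \<phi> x' \<in> borel_measurable SS.S"
    using S_meas[OF cont] nuZ by metis+
  define C where "C = {\<omega> \<in> space SS.S. (\<forall>i<Suc n. \<omega> i = j i) \<and> \<bar>y - Sfun b \<gamma> \<phi> x \<omega>\<bar> \<le> r}"
  define E where "E = {\<omega> \<in> space SS.S. (\<forall>i<n. \<omega> i = shift j i) \<and> \<bar>(y - \<phi> x') / \<gamma> - Sfun b \<gamma> \<phi> x' \<omega>\<bar> \<le> r / \<gamma>}"
  have LHS: "measure (mu b \<gamma> \<phi> x) (BT b (j, y, x) r \<inter> Part b (Suc n) (j, y, x)) = measure SS.S C"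
    unfolding generic[OF cont assms(7)] C_def nuZ by simp
  have RHS: "measure (mu b \<gamma> \<phi> ((x + real (j 0)) / real b))
           (BT b (Gmap b \<gamma> \<phi> (j, y, x)) (r / \<gamma>) \<inter> Part b n (Gmap b \<gamma> \<phi> (j, y, x))) = measure SS.S E"
    unfolding x'_def[symmetric] generic[OF cont x'] E_def nuZ by (simp add: Gmap_def x'_def)
  have ballm: "{\<omega>\<in>space SS.S. \<bar>y0 - Sfun b \<gamma> \<phi> x0 \<omega>\<bar> \<le> r0} \<in> sets SS.S" for y0 x0 r0
  proof -
    have "(\<lambda>\<omega>. \<bar>y0 - Sfun b \<gamma> \<phi> x0 \<omega>\<bar>) \<in> borel_measurable SS.S"
      using S_meas[OF cont, of b \<gamma> x0] nuZ by (intro borel_measurable_abs borel_measurable_diff) auto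
    then show ?thesis unfolding borel_measurable_iff_le by blast
  qed
  have Cm: "C \<in> sets SS.S"
  proof -
    have "C = {\<omega>\<in>space (nuZ b). \<forall>i<Suc n. \<omega> i = j i} \<inter> {\<omega>\<in>space SS.S. \<bar>y - Sfun b \<gamma> \<phi> x \<omega>\<bar> \<le> r}"
      unfolding C_def nuZ by blast
    moreover have "{\<omega>\<in>space (nuZ b). \<forall>i<Suc n. \<omega> i = j i} \<in> sets SS.S"
      using cylm[where N="Suc n" and c=j and b=b] unfolding nuZ .
    ultimately show ?thesis using ballm by (simp only: sets.Int)
  qed
  have Em: "E \<in> sets SS.S"
  proof -
    have "E = {\<omega>\<in>space (nuZ b). \<forall>i<n. \<omega> i = shift j i} \<inter> {\<omega>\<in>space SS.S. \<bar>(y - \<phi> x') / \<gamma> - Sfun b \<gamma> \<phi> x' \<omega>\<bar> \<le> r / \<gamma>}"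
      unfolding E_def nuZ by blast
    moreover have "{\<omega>\<in>space (nuZ b). \<forall>i<n. \<omega> i = shift j i} \<in> sets SS.S"
      using cylm[where N=n and c="shift j" and b=b] unfolding nuZ .
    ultimately show ?thesis using ballm by (simp only: sets.Int)
  qed
  
  have h: "(\<lambda>(s, \<omega>). case_nat s \<omega>) \<in> measurable (M \<Otimes>\<^sub>M SS.S) SS.S" by measurable
  have "measure SS.S C = measure (distr (M \<Otimes>\<^sub>M SS.S) SS.S (\<lambda>(s, \<omega>). case_nat s \<omega>)) C"
    using SS.PiM_iter by simp
  also have "\<dots> = measure (M \<Otimes>\<^sub>M SS.S) ((\<lambda>(s, \<omega>). case_nat s \<omega>) -` C \<inter> space (M \<Otimes>\<^sub>M SS.S))"
    using measure_distr[OF h Cm] .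
  also have "(\<lambda>(s, \<omega>). case_nat s \<omega>) -` C \<inter> space (M \<Otimes>\<^sub>M SS.S) = {j 0} \<times> E"
  proof -
    have key: "(\<bar>y - Sfun b \<gamma> \<phi> x (case_nat (j 0) \<omega>)\<bar> \<le> r) = (\<bar>(y - \<phi> x') / \<gamma> - Sfun b \<gamma> \<phi> x' \<omega>\<bar> \<le> r / \<gamma>)" for \<omega>
    proof -
      have "Sfun b \<gamma> \<phi> x (case_nat (j 0) \<omega>) = \<phi> x' + \<gamma> * Sfun b \<gamma> \<phi> x' \<omega>"
        unfolding x'_def using S_rec[OF assms(2,3) bnd] assms(1) by simp
      moreover have "(y - \<phi> x') / \<gamma> - Sfun b \<gamma> \<phi> x' \<omega> = (y - (\<phi> x' + \<gamma> * Sfun b \<gamma> \<phi> x' \<omega>)) / \<gamma>"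
        using assms(2) by (simp add: field_simps)
      ultimately show ?thesis using assms(2) by (simp add: abs_div pos_divide_le_eq)
    qed
    have sp: "space SS.S = Sig b" using nuZ space_nuZ by metis
    have sM: "space M = {0..<b}" unfolding M_def by (simp add: space_uniform_count_measure)
    show ?thesis
    proof (intro set_eqI iffI)
      fix z assume z: "z \<in> (\<lambda>(s, \<omega>). case_nat s \<omega>) -` C \<inter> space (M \<Otimes>\<^sub>M SS.S)"
      obtain s \<omega> where zz: "z = (s, \<omega>)" by force
      have s: "s < b" "\<omega> \<in> Sig b" using z zz sp sM by (auto simp: space_pair_measure)
      have c: "\<forall>i<Suc n. case_nat s \<omega> i = j i" "\<bar>y - Sfun b \<gamma> \<phi> x (case_nat s \<omega>)\<bar> \<le> r"
        using z zz unfolding C_def by auto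
      have "s = j 0" using c(1) by (metis nat.case(1) zero_less_Suc)
      moreover have "\<forall>i<n. \<omega> i = shift j i" using c(1) unfolding shift_def
        by (metis Suc_mono nat.case(2))
      ultimately show "z \<in> {j 0} \<times> E" using zz s c(2) key sp unfolding E_def by auto
    next
      fix z assume z: "z \<in> {j 0} \<times> E"
      obtain s \<omega> where zz: "z = (s, \<omega>)" by force
      have s: "s = j 0" "\<omega> \<in> Sig b" "\<forall>i<n. \<omega> i = shift j i"
        "\<bar>(y - \<phi> x') / \<gamma> - Sfun b \<gamma> \<phi> x' \<omega>\<bar> \<le> r / \<gamma>"
        using z zz sp unfolding E_def by auto
      have "case_nat s \<omega> \<in> Sig b" using s(1,2) j0 unfolding Sig_def by (auto split: nat.split)
      moreover have "\<forall>i<Suc n. case_nat s \<omega> i = j i"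
        using s(1,3) unfolding shift_def by (auto split: nat.split)
      ultimately show "z \<in> (\<lambda>(s, \<omega>). case_nat s \<omega>) -` C \<inter> space (M \<Otimes>\<^sub>M SS.S)"
        using zz s key j0 sp sM unfolding C_def by (auto simp: space_pair_measure)
    qed
  qed
  also have "measure (M \<Otimes>\<^sub>M SS.S) ({j 0} \<times> E) = measure M {j 0} * measure SS.S E"
  proof -
    have "{j 0} \<in> sets M" unfolding M_def using j0 by (simp add: sets_uniform_count_measure)
    then have "emeasure (M \<Otimes>\<^sub>M SS.S) ({j 0} \<times> E) = emeasure M {j 0} * emeasure SS.S E"
      using sigma_finite_measure.emeasure_pair_measure_Times[OF SS.P.sigma_finite_measure_axioms, of "{j 0}" M E] Em by blast
    then show ?thesis by (simp add: measure_def enn2real_mult)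
  qed
  also have "measure M {j 0} = 1 / real b"
    unfolding M_def using j0 by (subst measure_uniform_count_measure) auto
  finally show ?thesis using LHS RHS by simp
qed

end
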